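(* Let $k\ge 2$ be an integer and let $\mathcal H_{k\text{-word}}$ be the class of $k$-word-representable graphs. Then for every $p\in[0,1]$, $$\mathrm{ed}_{\mathcal H_{k\text{-word}}}(p)=\min\{p,\;1-p\}.$$ Consequently $\max\{\mathrm{dist}(G,\mathcal H_{k\text{-word}}) : |V(G)|=n\}=\tfrac12-o(1)$ as $n\to\infty$. Moreover, for every $\epsilon>0$ and every graph $G$ on $n\ge2$ vertices, if $\mathrm{dist}(G,\mathcal H_{k\text{-word}})\ge\tfrac12-\epsilon$, then $|E(G)|/\binom n2\in[\tfrac12-\epsilon,\tfrac12+\epsilon]$.
   Context: A word over an alphabet $V$ represents a graph $G=(V,E)$ if for all distinct $x,y\in V$: $xy\in E$ if and only if the occurrences of $x$ and $y$ alternate in the word. $G$ is $k$-word-representable if it is represented by a word in which every letter of $V$ occurs exactly $k$ times; $\mathcal H_{k\text{-word}}$ is the (hereditary) class of such graphs. For graphs $G,H$ on the same $n$-vertex set, $\mathrm{dist}(G,H)=|E(G)\triangle E(H)|/\binom n2$. For a hereditary property $\mathcal H$, $\mathrm{dist}(G,\mathcal H)=\min\{\mathrm{dist}(G,H): H\in\mathcal H,\ V(H)=V(G)\}$, and $\mathrm{ed}_{\mathcal H}(p)=\lim_{n\to\infty}\max\{\mathrm{dist}(G,\mathcal H): |V(G)|=n,\ |E(G)|=\lfloor p\binom n2\rfloor\}$ (the limit exists). *)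

theory Defs
  imports Complex_Main
begin

definition all_edges :: "nat \<Rightarrow> nat set set" where
  "all_edges n = {{x, y} | x y. x < n \<and> y < n \<and> x \<noteq> y}"

definition is_graph :: "nat \<Rightarrow> nat set set \<Rightarrow> bool" where
  "is_graph n E \<longleftrightarrow> E \<subseteq> all_edges n"

definition alternate :: "nat list \<Rightarrow> nat \<Rightarrow> nat \<Rightarrow> bool" where
  "alternate w x y \<longleftrightarrow>
     (let u = filter (\<lambda>c. c = x \<or> c = y) w in
      \<forall>i. Suc i < length u \<longrightarrow> u ! i \<noteq> u ! Suc i)"

definition word_represents :: "nat list \<Rightarrow> nat \<Rightarrow> nat set set \<Rightarrow> bool" where
  "word_represents w n E \<longleftrightarrow> set w \<subseteq> {0..<n} \<and>
     (\<forall>x<n. \<forall>y<n. x \<noteq> y \<longrightarrow> ({x, y} \<in> E \<longleftrightarrow> alternate w x y))"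

definition k_word_representable :: "nat \<Rightarrow> nat \<Rightarrow> nat set set \<Rightarrow> bool" where
  "k_word_representable k n E \<longleftrightarrow>
     (\<exists>w. word_represents w n E \<and> (\<forall>v<n. count_list w v = k))"

definition gdist :: "nat \<Rightarrow> nat set set \<Rightarrow> nat set set \<Rightarrow> real" where
  "gdist n G H = real (card (G - H \<union> (H - G))) / real (n choose 2)"

definition dist_kword :: "nat \<Rightarrow> nat \<Rightarrow> nat set set \<Rightarrow> real" where
  "dist_kword k n G = Min {gdist n G H | H. is_graph n H \<and> k_word_representable k n H}"

definition max_dist_density :: "nat \<Rightarrow> real \<Rightarrow> nat \<Rightarrow> real" where
  "max_dist_density k p n =
     Max {dist_kword k n G | G. is_graph n G \<and> card G = nat \<lfloor>p * real (n choose 2)\<rfloor>}"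

definition max_dist :: "nat \<Rightarrow> nat \<Rightarrow> real" where
  "max_dist k n = Max {dist_kword k n G | G. is_graph n G}"

end

theory Submission imports Defs "HOL-Real_Asymp.Real_Asymp" begin


lemma all_edges_eq: "all_edges n = {X. X \<subseteq> {0..<n} \<and> card X = 2}"
proof (intro set_eqI iffI)
  fix X assume "X \<in> all_edges n" then show "X \<in> {X. X \<subseteq> {0..<n} \<and> card X = 2}"
    unfolding all_edges_def by auto
next
  fix X assume "X \<in> {X. X \<subseteq> {0..<n} \<and> card X = 2}"
  then obtain x y where "X = {x, y}" "x \<noteq> y" "X \<subseteq> {0..<n}" by (auto simp: card_2_iff)
  then show "X \<in> all_edges n" unfolding all_edges_def by auto
qed

lemma finite_all_edges: "finite (all_edges n)"
  by (simp add: all_edges_eq)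

lemma card_all_edges: "card (all_edges n) = n choose 2"
  using n_subsets[of "{0..<n}" 2] by (simp add: all_edges_eq)

lemma alt_nth_concat_rep: "i < 2 * k \<Longrightarrow> concat (replicate k [a, b]) ! i = (if even i then a else b)"
proof (induction k arbitrary: i)
  case 0 then show ?case by simp
next
  case (Suc k)
  show ?case
  proof (cases "i < 2")
    case True then show ?thesis by (cases i) (auto simp: nth_append)
  next
    case False
    then have "concat (replicate (Suc k) [a, b]) ! i = concat (replicate k [a, b]) ! (i - 2)"
      by (simp add: nth_Cons' numeral_2_eq_2)
    then show ?thesis using Suc False by auto
  qed
qed

lemma filter_upt_two:
  assumes "a < b" "b < n"
  shows "filter (\<lambda>c. c = a \<or> c = b) [0..<n] = [a, b]"
proof -
  have s1: "[0..<n] = [0..<a] @ [a..<n]" using upt_add_eq_append[of 0 a "n - a"] assms by simp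
  have s2: "[a..<n] = a # [Suc a..<n]" using assms by (simp add: upt_conv_Cons)
  have s3: "[Suc a..<n] = [Suc a..<b] @ [b..<n]" using upt_add_eq_append[of "Suc a" b "n - b"] assms by simp
  have s4: "[b..<n] = b # [Suc b..<n]" using assms by (simp add: upt_conv_Cons)
  have "[0..<n] = [0..<a] @ [a] @ [Suc a..<b] @ [b] @ [Suc b..<n]"
    using s1 s2 s3 s4 assms by simp
  moreover have "filter (\<lambda>c. c = a \<or> c = b) [0..<a] = []" using assms by (auto simp: filter_empty_conv)
  moreover have "filter (\<lambda>c. c = a \<or> c = b) [Suc a..<b] = []" using assms by (auto simp: filter_empty_conv)
  moreover have "filter (\<lambda>c. c = a \<or> c = b) [Suc b..<n] = []" using assms by (auto simp: filter_empty_conv)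
  ultimately show ?thesis using assms by simp
qed

lemma count_upt: "v < n \<Longrightarrow> count_list [0..<n] v = 1"
  by (induction n) auto

definition cword :: "nat \<Rightarrow> nat \<Rightarrow> nat list" where
  "cword k n = concat (replicate k [0..<n])"

definition eword :: "nat \<Rightarrow> nat \<Rightarrow> nat list" where
  "eword k n = concat (map (\<lambda>v. replicate k v) [0..<n])"

lemma count_cword: "v < n \<Longrightarrow> count_list (cword k n) v = k"
  unfolding cword_def by (induction k) (auto simp: count_upt)

lemma count_rep: "count_list (replicate k a) v = (if a = v then k else 0)"
  by (induction k) auto

lemma count_eword: "v < n \<Longrightarrow> count_list (eword k n) v = k"
  unfolding eword_def
proof (induction n)
  case (Suc n) then show ?case
    by (cases "v = n") (auto simp: count_rep count_list_0_iff)
qed simp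

lemma filter_concat_rep: "filter P (concat (replicate k xs)) = concat (replicate k (filter P xs))"
  by (induction k) auto

lemma cword_alt:
  assumes "x < n" "y < n" "x \<noteq> y"
  shows "alternate (cword k n) x y"
proof -
  define a where "a = min x y"
  define b where "b = max x y"
  have ab: "a < b" "b < n" "(\<lambda>c. c = x \<or> c = y) = (\<lambda>c. c = a \<or> c = b)"
    using assms by (auto simp: a_def b_def)
  have "filter (\<lambda>c. c = x \<or> c = y) (cword k n) = concat (replicate k [a, b])"
    unfolding cword_def filter_concat_rep ab(3) filter_upt_two[OF ab(1,2)] ..
  moreover have "length (concat (replicate k [a, b])) = 2 * k" by (induction k) auto
  ultimately show ?thesis using ab(1)
    unfolding alternate_def Let_def by (auto simp: alt_nth_concat_rep)
qed

lemma eword_not_alt: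
  assumes "x < n" "y < n" "x \<noteq> y" "k \<ge> 2"
  shows "\<not> alternate (eword k n) x y"
proof -
  define a where "a = min x y"
  have a: "a < n" "a = x \<or> a = y" using assms by (auto simp: a_def)
  have pre: "\<forall>v\<in>set [0..<a]. \<not> (v = x \<or> v = y)" by (auto simp: a_def)
  have s1: "[0..<n] = [0..<a] @ [a..<n]" using upt_add_eq_append[of 0 a "n - a"] a(1) by simp
  have s2: "[a..<n] = a # [Suc a..<n]" using a(1) by (simp add: upt_conv_Cons)
  have "[0..<n] = [0..<a] @ a # [Suc a..<n]" using s1 s2 by simp
  then have "filter (\<lambda>c. c = x \<or> c = y) (eword k n)
     = filter (\<lambda>c. c = x \<or> c = y) (concat (map (\<lambda>v. replicate k v) [0..<a]))
       @ replicate k a @ filter (\<lambda>c. c = x \<or> c = y) (concat (map (\<lambda>v. replicate k v) [Suc a..<n]))"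
    unfolding eword_def using a(2) by (auto simp: filter_replicate)
  moreover have "filter (\<lambda>c. c = x \<or> c = y) (concat (map (\<lambda>v. replicate k v) [0..<a])) = []"
    using pre by (auto simp: filter_empty_conv)
  ultimately have u: "filter (\<lambda>c. c = x \<or> c = y) (eword k n) = replicate k a @ filter (\<lambda>c. c = x \<or> c = y) (concat (map (\<lambda>v. replicate k v) [Suc a..<n]))"
    by simp
  show ?thesis unfolding alternate_def Let_def u
    using assms(4) by (auto intro!: exI[of _ 0] simp: nth_append)
qed

lemma set_eword: "set (eword k n) \<subseteq> {0..<n}"
  unfolding eword_def by auto

lemma set_cword: "set (cword k n) \<subseteq> {0..<n}"
  unfolding cword_def by (cases k) auto

lemma rep_empty: "k \<ge> 2 \<Longrightarrow> k_word_representable k n {}"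
  unfolding k_word_representable_def word_represents_def
  by (intro exI[of _ "eword k n"]) (use set_eword in \<open>auto simp: count_eword eword_not_alt\<close>)

lemma rep_full: "k_word_representable k n (all_edges n)"
  unfolding k_word_representable_def word_represents_def
  by (intro exI[of _ "cword k n"]) (use set_cword in \<open>auto simp: count_cword cword_alt all_edges_def\<close>)




definition reps :: "nat \<Rightarrow> nat \<Rightarrow> nat set set set" where
  "reps k n = {H. is_graph n H \<and> k_word_representable k n H}"

lemma reps_sub: "reps k n \<subseteq> Pow (all_edges n)"
  by (auto simp: reps_def is_graph_def)

lemma finite_reps: "finite (reps k n)"
  using reps_sub finite_all_edges by (meson finite_Pow_iff finite_subset)

lemma dist_kword_alt: "dist_kword k n G = Min ((gdist n G) ` reps k n)"
  unfolding dist_kword_def reps_def by (rule arg_cong[where f=Min]) auto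

lemma dist_le: "H \<in> reps k n \<Longrightarrow> dist_kword k n G \<le> gdist n G H"
  unfolding dist_kword_alt using finite_reps by auto

lemma empty_reps: "k \<ge> 2 \<Longrightarrow> {} \<in> reps k n"
  by (auto simp: reps_def is_graph_def rep_empty)

lemma full_reps: "all_edges n \<in> reps k n"
  by (auto simp: reps_def is_graph_def rep_full)

lemma dist_ge:
  assumes "k \<ge> 2" "\<And>H. H \<in> reps k n \<Longrightarrow> b \<le> gdist n G H"
  shows "b \<le> dist_kword k n G"
  unfolding dist_kword_alt using finite_reps[of k n] empty_reps[OF assms(1), of n] assms(2)
  by (subst Min_ge_iff) auto

lemma dist_upper1:
  assumes "k \<ge> 2" "is_graph n G"
  shows "dist_kword k n G \<le> real (card G) / real (n choose 2)"
  using dist_le[OF empty_reps[OF assms(1)], of n G] by (simp add: gdist_def)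

lemma dist_upper2:
  assumes "is_graph n G"
  shows "dist_kword k n G \<le> (real (n choose 2) - real (card G)) / real (n choose 2)"
proof -
  have "G \<subseteq> all_edges n" using assms by (simp add: is_graph_def)
  then have "G - all_edges n \<union> (all_edges n - G) = all_edges n - G" by auto
  moreover have "card (all_edges n - G) = (n choose 2) - card G"
    using \<open>G \<subseteq> all_edges n\<close> finite_all_edges by (simp add: card_Diff_subset card_all_edges finite_subset)
  moreover have "card G \<le> n choose 2"
    using \<open>G \<subseteq> all_edges n\<close> finite_all_edges card_mono card_all_edges by metis
  ultimately show ?thesis using dist_le[OF full_reps, of k n G] by (simp add: gdist_def of_nat_diff)
qed

lemma reps_words:
  "reps k n \<subseteq> (\<lambda>w. {{x, y} | x y. x < n \<and> y < n \<and> x \<noteq> y \<and> alternate w x y}) ` {w. set w \<subseteq> {0..<n} \<and> length w = k * n}"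
proof
  fix H assume "H \<in> reps k n"
  then obtain w where w: "word_represents w n H" "\<forall>v<n. count_list w v = k" "is_graph n H"
    by (auto simp: reps_def k_word_representable_def)
  have sw: "set w \<subseteq> {0..<n}" using w(1) by (simp add: word_represents_def)
  have "length w = sum (count_list w) {0..<n}" using sum_count_set[OF sw] by simp
  also have "\<dots> = k * n" using w(2) by simp
  finally have lw: "length w = k * n" .
  have "H = {{x, y} | x y. x < n \<and> y < n \<and> x \<noteq> y \<and> alternate w x y}"
  proof (intro set_eqI iffI)
    fix e assume "e \<in> H"
    then obtain x y where "e = {x, y}" "x < n" "y < n" "x \<noteq> y"
      using w(3) by (auto simp: is_graph_def all_edges_def)
    then show "e \<in> {{x, y} | x y. x < n \<and> y < n \<and> x \<noteq> y \<and> alternate w x y}"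
      using w(1) \<open>e \<in> H\<close> unfolding word_represents_def by blast
  next
    fix e assume "e \<in> {{x, y} | x y. x < n \<and> y < n \<and> x \<noteq> y \<and> alternate w x y}"
    then show "e \<in> H" using w(1) unfolding word_represents_def by blast
  qed
  then show "H \<in> (\<lambda>w. {{x, y} | x y. x < n \<and> y < n \<and> x \<noteq> y \<and> alternate w x y}) ` {w. set w \<subseteq> {0..<n} \<and> length w = k * n}"
    using sw lw by blast
qed

lemma card_reps: "card (reps k n) \<le> n ^ (k * n)"
proof -
  have "card (reps k n) \<le> card {w. set w \<subseteq> {0..<n} \<and> length w = k * n}"
  proof -
    let ?W = "{w. set w \<subseteq> {0..<n} \<and> length w = k * n}"
    let ?f = "\<lambda>w. {{x, y} | x y. x < n \<and> y < n \<and> x \<noteq> y \<and> alternate w x y}"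
    have fW: "finite ?W" by (rule finite_lists_length_eq) simp
    have "card (reps k n) \<le> card (?f ` ?W)"
      by (rule card_mono[OF finite_imageI[OF fW] reps_words])
    also have "\<dots> \<le> card ?W" by (rule card_image_le[OF fW])
    finally show ?thesis .
  qed
  then show ?thesis by (simp add: card_lists_length_eq)
qed




lemma slice_card:
  assumes "finite A" "H \<subseteq> A" "j \<le> m"
  shows "card {G. G \<subseteq> A \<and> card G = m \<and> card (G \<inter> H) = j}
         \<le> (card H choose j) * ((card A - card H) choose (m - j))"
proof -
  let ?S = "{G. G \<subseteq> A \<and> card G = m \<and> card (G \<inter> H) = j}"
  let ?X = "{X. X \<subseteq> H \<and> card X = j}"
  let ?Y = "{Y. Y \<subseteq> A - H \<and> card Y = m - j}"
  have fH: "finite H" using assms finite_subset by blast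
  have inj: "inj_on (\<lambda>G. (G \<inter> H, G - H)) ?S" by (rule inj_onI) auto
  have img: "(\<lambda>G. (G \<inter> H, G - H)) ` ?S \<subseteq> ?X \<times> ?Y"
  proof (rule image_subsetI)
    fix G assume "G \<in> ?S"
    then have G: "G \<subseteq> A" "card G = m" "card (G \<inter> H) = j" by auto
    have "finite G" using G assms finite_subset by blast
    then have "card G = card (G \<inter> H) + card (G - H)"
      by (metis Int_Diff_Un Int_Diff_disjoint card_Un_disjoint finite_Diff finite_Int)
    then have "card (G - H) = m - j" using G by simp
    then show "(G \<inter> H, G - H) \<in> ?X \<times> ?Y" using G by auto
  qed
  have "card ?S \<le> card (?X \<times> ?Y)"
    by (rule card_inj_on_le[OF inj img]) (use assms fH in \<open>auto intro: finite_cartesian_product\<close>)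
  also have "\<dots> = card ?X * card ?Y" by (rule card_cartesian_product)
  also have "card ?X = card H choose j" using n_subsets[OF fH] by simp
  also have "card ?Y = (card A - card H) choose (m - j)"
    using n_subsets[of "A - H" "m - j"] assms by (simp add: card_Diff_subset fH)
  finally show ?thesis .
qed

lemma prod_le_choose:
  assumes "h \<le> N" "j \<le> m"
  shows "(h choose j) * ((N - h) choose (m - j)) \<le> N choose m"
proof -
  have "(h choose j) * ((N - h) choose (m - j)) \<le> (\<Sum>i\<le>m. (h choose i) * ((N - h) choose (m - i)))"
    by (rule member_le_sum) (use assms in auto)
  also have "\<dots> = N choose m" using vandermonde[of h "N - h" m] assms by simp
  finally show ?thesis .
qed

lemma choose_step: "(k + 1) * (n choose (k + 1)) = (n - k) * (n choose k)"
  using binomial_absorption[of k n] binomial_absorb_comp[of n k] by simp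

definition TT :: "nat \<Rightarrow> nat \<Rightarrow> nat \<Rightarrow> nat \<Rightarrow> real" where
  "TT N h m j = (if j \<le> m then real ((h choose j) * ((N - h) choose (m - j))) else 0)"

lemma TT_nonneg: "TT N h m j \<ge> 0" by (simp add: TT_def)

lemma TT_le: "h \<le> N \<Longrightarrow> TT N h m j \<le> real (N choose m)"
  using prod_le_choose[of h N j m] by (auto simp: TT_def simp flip: of_nat_mult)

lemma TT_ratio:
  assumes hN: "h \<le> N" and mN: "m \<le> N" and s: "0 \<le> s" "s \<le> real N" and N: "N > 0"
    and j: "real j \<ge> real h * real m / real N + s"
  shows "TT N h m (j + 1) \<le> (1 - s / real N) * TT N h m j"
proof -
  have r0: "0 \<le> 1 - s / real N" using s N by (simp add: field_simps)
  have rhs0: "0 \<le> (1 - s / real N) * TT N h m j" using r0 TT_nonneg by simp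
  consider "j + 1 > m" | "j + 1 > h" | "j + 1 \<le> m" "j + 1 \<le> h" "m - j - 1 > N - h"
    | "j + 1 \<le> m" "j + 1 \<le> h" "m - j - 1 \<le> N - h" by linarith
  then show ?thesis
  proof cases
    case 1 then show ?thesis using rhs0 by (simp add: TT_def)
  next
    case 2 then have "h choose Suc j = 0" by simp
    then have "TT N h m (j + 1) = 0" by (simp add: TT_def)
    then show ?thesis using rhs0 by (simp add: TT_def)
  next
    case 3 then have "(N - h) choose (m - Suc j) = 0" by simp
    then have "TT N h m (j + 1) = 0" by (simp add: TT_def)
    then show ?thesis using rhs0 by (simp add: TT_def)
  next
    case 4
    define q where "q = N - h"
    define b where "b = m - j - 1"
    have mj: "m - j = b + 1" using 4 by (simp add: b_def)
    have c1: "real (j + 1) * real (h choose (j + 1)) = real (h - j) * real (h choose j)"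
      using choose_step[of j h] by (metis of_nat_mult)
    have c2: "real (b + 1) * real (q choose (b + 1)) = real (q - b) * real (q choose b)"
      using choose_step[of b q] by (metis of_nat_mult)
    have Tj1: "TT N h m (j + 1) = real (h choose (j + 1)) * real (q choose b)"
      using 4 by (simp add: TT_def q_def b_def)
    have Tj: "TT N h m j = real (h choose j) * real (q choose (b + 1))"
      using 4 mj by (simp add: TT_def q_def)
    define D where "D = real (j + 1) * real (q - b)"
    have qb: "real (q - b) = real N - real h - real m + real j + 1"
      using 4 hN by (simp add: q_def b_def of_nat_diff)
    have hj: "real (h - j) = real h - real j" using 4 by (simp add: of_nat_diff)
    have bm: "real (b + 1) = real m - real j" using 4 mj by (simp add: of_nat_diff)
    have eq: "D * TT N h m (j + 1) = (real h - real j) * (real m - real j) * TT N h m j"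
    proof -
      have "D * TT N h m (j + 1) = (real (j + 1) * real (h choose (j + 1))) * (real (q - b) * real (q choose b))"
        unfolding D_def Tj1 by (simp only: mult_ac)
      also have "\<dots> = (real (h - j) * real (h choose j)) * (real (b + 1) * real (q choose (b + 1)))"
        using c1 c2 by simp
      also have "\<dots> = (real h - real j) * (real m - real j) * TT N h m j"
        using hj bm Tj by simp
      finally show ?thesis .
    qed
    have key: "(real h - real j) * (real m - real j) \<le> (1 - s / real N) * D"
    proof -
      have iden: "(real h - real j) * (real m - real j) = real j * (real N - real h - real m + real j) + (real h * real m - real j * real N)"
        by (simp add: algebra_simps)
      have "real h * real m - real j * real N \<le> - s * real N"
      proof -
        have "real h * real m / real N \<le> real j - s" using j by simp
        then have "real h * real m \<le> (real j - s) * real N" using N by (simp add: pos_divide_le_eq)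
        then show ?thesis by (simp add: algebra_simps)
      qed
      moreover have "real j * (real N - real h - real m + real j) \<le> D"
      proof -
        have "-1 \<le> real N - real h - real m + real j" using qb by (smt (verit) of_nat_0_le_iff)
        then have "0 \<le> real j + (real N - real h - real m + real j) + 1" by simp
        moreover have "D - real j * (real N - real h - real m + real j) = real j + (real N - real h - real m + real j) + 1"
          unfolding D_def qb by (simp add: algebra_simps)
        ultimately show ?thesis by linarith
      qed
      moreover have "D \<le> real N * real N"
      proof -
        have "real (j + 1) \<le> real N" using 4 hN by simp
        moreover have "real (q - b) \<le> real N" using 4 by (simp add: q_def b_def)
        ultimately show ?thesis unfolding D_def by (intro mult_mono) auto
      qed
      moreover have "s / real N * D \<le> s * real N"
      proof -
        have "s / real N * D \<le> s / real N * (real N * real N)"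
          using \<open>D \<le> real N * real N\<close> s N by (intro mult_left_mono) auto
        then show ?thesis using N by simp
      qed
      ultimately show ?thesis using iden by (simp add: algebra_simps)
    qed
    have D0: "D > 0"
    proof -
      have "D \<ge> 0" by (simp add: D_def)
      moreover have "(real h - real j) * (real m - real j) > 0" using 4 by simp
      ultimately show ?thesis using key by (cases "D = 0") auto
    qed
    have "D * TT N h m (j + 1) \<le> D * ((1 - s / real N) * TT N h m j)"
      unfolding eq using mult_right_mono[OF key TT_nonneg] by (simp add: algebra_simps)
    then show ?thesis using D0 by simp
  qed
qed




lemma TT_chain:
  assumes hN: "h \<le> N" and mN: "m \<le> N" and s: "0 \<le> s" "s \<le> real N" and N: "N > 0"
    and j0: "real j0 \<ge> real h * real m / real N + s"
  shows "TT N h m (j0 + i) \<le> (1 - s / real N) ^ i * real (N choose m)"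
proof (induction i)
  case 0 then show ?case using TT_le[OF hN] by simp
next
  case (Suc i)
  have r0: "0 \<le> 1 - s / real N" using s N by (simp add: field_simps)
  have "TT N h m (j0 + i + 1) \<le> (1 - s / real N) * TT N h m (j0 + i)"
    by (rule TT_ratio[OF hN mN s N]) (use j0 in simp)
  also have "\<dots> \<le> (1 - s / real N) * ((1 - s / real N) ^ i * real (N choose m))"
    using Suc r0 by (intro mult_left_mono) auto
  finally show ?case by simp
qed

lemma pow_exp: "0 \<le> x \<Longrightarrow> x \<le> 1 \<Longrightarrow> (1 - x) ^ n \<le> exp (- x * real n)"
proof -
  assume x: "0 \<le> x" "x \<le> 1"
  have "(1 - x) ^ n \<le> exp (- x) ^ n"
    by (rule power_mono) (use x exp_ge_add_one_self[of "-x"] in auto)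
  also have "\<dots> = exp (- x * real n)" by (simp add: exp_of_nat_mult[symmetric] mult.commute)
  finally show ?thesis .
qed

lemma bad_bound:
  assumes A: "finite A" "card A > 0" and H: "H \<subseteq> A" and m: "m \<le> card A"
    and e: "0 < e" "e \<le> 1"
  shows "real (card {G. G \<subseteq> A \<and> card G = m \<and>
            real (card (G \<inter> H)) \<ge> real (card H) * real m / real (card A) + 2 * (e * real (card A))})
         \<le> real (m + 1) * exp (- e * (e * real (card A) - 1)) * real (card A choose m)"
proof -
  define N where "N = card A"
  define h where "h = card H"
  define s where "s = e * real N"
  define mu where "mu = real h * real m / real N"
  define j0 where "j0 = nat \<lceil>mu + s\<rceil>"
  define J where "J = {j. j \<le> m \<and> real j \<ge> mu + 2 * s}"
  define sl where "sl j = {G. G \<subseteq> A \<and> card G = m \<and> card (G \<inter> H) = j}" for j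
  have N0: "N > 0" using A by (simp add: N_def)
  have hN: "h \<le> N" using H A by (simp add: h_def N_def card_mono)
  have mN: "m \<le> N" using m by (simp add: N_def)
  have s0: "0 \<le> s" "s \<le> real N" using e mult_right_mono[of e 1 "real N"] by (auto simp: s_def)
  have mu0: "mu \<ge> 0" by (simp add: mu_def)
  have j0a: "real j0 \<ge> mu + s" unfolding j0_def using mu0 s0 by linarith
  have j0b: "real j0 < mu + s + 1" unfolding j0_def using mu0 s0 by linarith
  have fJ: "finite J" by (simp add: J_def)
  have cJ: "card J \<le> m + 1"
  proof -
    have "J \<subseteq> {0..m}" by (auto simp: J_def)
    then show ?thesis using card_mono[of "{0..m}" J] by simp
  qed
  have sub: "{G. G \<subseteq> A \<and> card G = m \<and> real (card (G \<inter> H)) \<ge> real h * real m / real N + 2 * s} \<subseteq> (\<Union>j\<in>J. sl j)"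
  proof
    fix G assume G: "G \<in> {G. G \<subseteq> A \<and> card G = m \<and> real (card (G \<inter> H)) \<ge> real h * real m / real N + 2 * s}"
    have "finite G" using G A finite_subset by blast
    then have "card (G \<inter> H) \<le> m" using G card_mono[of G "G \<inter> H"] by auto
    then show "G \<in> (\<Union>j\<in>J. sl j)" using G by (auto simp: J_def sl_def mu_def)
  qed
  have fsl: "finite (sl j)" for j
  proof (rule finite_subset[of _ "Pow A"])
    show "sl j \<subseteq> Pow A" by (auto simp: sl_def)
  qed (use A in simp)
  have each: "real (card (sl j)) \<le> exp (- e * (s - 1)) * real (N choose m)" if j: "j \<in> J" for j
  proof -
    have jm: "j \<le> m" and jge: "real j \<ge> mu + 2 * s" using j by (auto simp: J_def)
    have "card (sl j) \<le> (h choose j) * ((N - h) choose (m - j))"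
      unfolding sl_def h_def N_def by (rule slice_card[OF A(1) H jm])
    then have "real (card (sl j)) \<le> TT N h m j"
      using jm unfolding TT_def by (simp flip: of_nat_mult)
    moreover have jj0: "j0 \<le> j"
    proof -
      have "real j \<ge> mu + s" using jge s0 by simp
      then have "\<lceil>mu + s\<rceil> \<le> int j" by (simp add: ceiling_le_iff)
      then show ?thesis unfolding j0_def by (simp only: nat_le_iff)
    qed
    moreover have "TT N h m (j0 + (j - j0)) \<le> (1 - s / real N) ^ (j - j0) * real (N choose m)"
      by (rule TT_chain[OF hN mN s0 N0]) (use j0a in \<open>simp add: mu_def\<close>)
    moreover have "(1 - s / real N) ^ (j - j0) \<le> exp (- (s / real N) * real (j - j0))"
      by (rule pow_exp) (use s0 N0 in auto)
    moreover have "exp (- (s / real N) * real (j - j0)) \<le> exp (- e * (s - 1))"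
    proof -
      have "s / real N = e" using N0 by (simp add: s_def)
      moreover have "real (j - j0) \<ge> s - 1" using jj0 jge j0b by (simp add: of_nat_diff)
      ultimately show ?thesis using e by simp
    qed
    ultimately show ?thesis using jj0
      by (smt (verit, ccfv_SIG) le_add_diff_inverse mult_right_mono of_nat_0_le_iff)
  qed
  have "card {G. G \<subseteq> A \<and> card G = m \<and> real (card (G \<inter> H)) \<ge> real h * real m / real N + 2 * s}
        \<le> card (\<Union>j\<in>J. sl j)"
    by (rule card_mono[OF _ sub]) (use fJ fsl in auto)
  also have "\<dots> \<le> (\<Sum>j\<in>J. card (sl j))" by (rule card_UN_le[OF fJ])
  finally have "real (card {G. G \<subseteq> A \<and> card G = m \<and> real (card (G \<inter> H)) \<ge> real h * real m / real N + 2 * s})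
        \<le> (\<Sum>j\<in>J. real (card (sl j)))" by (simp flip: of_nat_sum)
  also have "\<dots> \<le> (\<Sum>j\<in>J. exp (- e * (s - 1)) * real (N choose m))"
    by (rule sum_mono) (rule each)
  also have "\<dots> = real (card J) * (exp (- e * (s - 1)) * real (N choose m))" by simp
  also have "\<dots> \<le> real (m + 1) * (exp (- e * (s - 1)) * real (N choose m))"
    using cJ by (intro mult_right_mono) auto
  finally show ?thesis by (simp add: N_def h_def s_def mult.assoc)
qed




lemma choose2_real: "real (n choose 2) = real n * (real n - 1) / 2"
proof -
  have ev: "even (n * (n - 1))" by (cases "even n") auto
  have "2 * (n choose 2) = n * (n - 1)" unfolding choose_two using ev by simp
  then have "2 * real (n choose 2) = real n * real (n - 1)" by (metis of_nat_mult of_nat_numeral)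
  then show ?thesis by (cases n) auto
qed

lemma asym_aux: "(\<lambda>n::nat. (real n * ln (real n) + 1) / (real n) ^ 2) \<longlonglongrightarrow> 0"
  by real_asymp

lemma eventually_small:
  assumes e: "0 < e" "e \<le> 1"
  shows "eventually (\<lambda>n. real (n ^ (k * n)) * real ((n choose 2) + 1) * exp (- e * (e * real (n choose 2) - 1)) < 1) sequentially"
proof -
  define d where "d = e ^ 2 / (4 * (real k + 3))"
  have d0: "d > 0" using e by (simp add: d_def)
  have ev1: "eventually (\<lambda>n. (real n * ln (real n) + 1) / (real n) ^ 2 < d) sequentially"
    using order_tendstoD(2)[OF asym_aux d0] .
  have ev2: "eventually (\<lambda>n::nat. n \<ge> 3) sequentially" by (rule eventually_ge_at_top)
  show ?thesis using ev1 ev2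
  proof eventually_elim
    case (elim n)
    define X where "X = real (n choose 2)"
    have n3: "real n \<ge> 3" using elim by simp
    have n0: "real n > 0" using n3 by simp
    have lnpos: "ln (real n) > 0" using n3 by simp
    have X: "X = real n * (real n - 1) / 2" by (simp add: X_def choose2_real)
    have Xlow: "X \<ge> real n ^ 2 / 4" unfolding X using n3 by (simp add: power2_eq_square field_simps)
    have nn: "real n * real n \<ge> 3 * 3" using n3 by (intro mult_mono) auto
    have X1: "X + 1 \<le> real n ^ 2" unfolding X using n3 nn by (simp add: power2_eq_square field_simps)
    have X0: "X \<ge> 0" unfolding X using n3 by simp
    have A: "real (n ^ (k * n)) = exp (real k * real n * ln (real n))"
    proof -
      have "real (n ^ (k * n)) = exp (ln (real n)) ^ (k * n)" using n0 by simp
      also have "\<dots> = exp (real (k * n) * ln (real n))" by (simp add: exp_of_nat_mult[symmetric])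
      finally show ?thesis by simp
    qed
    have B: "real ((n choose 2) + 1) = exp (ln (X + 1))" using X0 by (simp add: X_def)
    have lnX: "ln (X + 1) \<le> 2 * ln (real n)"
    proof -
      have "ln (X + 1) \<le> ln (real n ^ 2)" using X1 X0 n0 by (subst ln_le_cancel_iff) auto
      then show ?thesis using n0 by (simp add: ln_realpow)
    qed
    have small: "real n * ln (real n) + 1 < d * real n ^ 2"
      using elim n0 by (simp add: pos_divide_less_eq)
    have "real k * real n * ln (real n) + ln (X + 1) + e \<le> (real k + 2) * (real n * ln (real n) + 1)"
    proof -
      have "2 * ln (real n) \<le> 2 * (real n * ln (real n))" using n3 lnpos by simp
      then show ?thesis using lnX e by (simp add: algebra_simps)
    qed
    also have "\<dots> < (real k + 2) * (d * real n ^ 2)"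
      using small by (intro mult_strict_left_mono) auto
    also have "\<dots> \<le> (real k + 3) * (d * real n ^ 2)"
      using d0 by (intro mult_right_mono) auto
    also have "\<dots> = e ^ 2 * real n ^ 2 / 4" unfolding d_def by (simp add: field_simps)
    also have "\<dots> \<le> e ^ 2 * X" using Xlow e by simp
    finally have key: "real k * real n * ln (real n) + ln (X + 1) - e * (e * X - 1) < 0"
      by (simp add: power2_eq_square algebra_simps)
    have "real (n ^ (k * n)) * real ((n choose 2) + 1) * exp (- e * (e * real (n choose 2) - 1))
        = exp (real k * real n * ln (real n) + ln (X + 1) - e * (e * X - 1))"
    proof -
      have "exp (real k * real n * ln (real n) + ln (X + 1) - e * (e * X - 1))
          = exp (real k * real n * ln (real n)) * (X + 1) * exp (- e * (e * X - 1))"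
        using X0 by (simp add: exp_add exp_diff exp_minus divide_inverse)
      then show ?thesis unfolding A by (simp add: X_def)
    qed
    also have "\<dots> < 1" using key by simp
    finally show ?case .
  qed
qed




lemma invN: "(\<lambda>n. 1 / real (n choose 2)) \<longlonglongrightarrow> 0"
  unfolding choose2_real by real_asymp

lemma symdiff_card:
  assumes "finite G" "finite H"
  shows "card (G - H \<union> (H - G)) + 2 * card (G \<inter> H) = card G + card H"
proof -
  have "card (G - H \<union> (H - G)) = card (G - H) + card (H - G)"
    by (rule card_Un_disjoint) (use assms in auto)
  moreover have "card G = card (G - H) + card (G \<inter> H)"
    using assms by (metis Int_Diff_Un Int_Diff_disjoint card_Un_disjoint finite_Diff finite_Int add.commute)
  moreover have "card H = card (H - G) + card (G \<inter> H)"
    using assms by (metis Int_Diff_Un Int_Diff_disjoint card_Un_disjoint finite_Diff finite_Int add.commute Int_commute)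
  ultimately show ?thesis by simp
qed

lemma mh_bound:
  fixes h m N :: real
  assumes "0 \<le> h" "h \<le> N" "0 \<le> m" "m \<le> N" "N > 0"
  shows "m + h - 2 * h * m / N \<ge> min m (N - m)"
proof -
  have eq: "m + h - 2 * h * m / N = m + h * (N - 2 * m) / N" using assms by (simp add: field_simps)
  show ?thesis
  proof (cases "N - 2 * m \<ge> 0")
    case True
    then have "h * (N - 2 * m) / N \<ge> 0" using assms by simp
    then show ?thesis using eq by linarith
  next
    case False
    then have "h * (N - 2 * m) \<ge> N * (N - 2 * m)" using assms by (intro mult_right_mono_neg) auto
    then have "h * (N - 2 * m) / N \<ge> N - 2 * m" using assms by (simp add: pos_le_divide_eq mult.commute)
    then show ?thesis using eq by linarith
  qed
qed

lemma good_exists: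
  assumes k: "k \<ge> 2" and n: "n \<ge> 2" and e: "0 < e" "e \<le> 1"
    and sm: "real (n ^ (k * n)) * real ((n choose 2) + 1) * exp (- e * (e * real (n choose 2) - 1)) < 1"
    and m: "m \<le> n choose 2"
  shows "\<exists>G. is_graph n G \<and> card G = m \<and>
           dist_kword k n G \<ge> min (real m) (real (n choose 2) - real m) / real (n choose 2) - 4 * e"
proof -
  define A where "A = all_edges n"
  define N where "N = n choose 2"
  have fA: "finite A" by (simp add: A_def finite_all_edges)
  have cA: "card A = N" by (simp add: A_def N_def card_all_edges)
  have N0: "N > 0" using n by (simp add: N_def)
  define Bad where "Bad H = {G. G \<subseteq> A \<and> card G = m \<and>
            real (card (G \<inter> H)) \<ge> real (card H) * real m / real (card A) + 2 * (e * real (card A))}" for H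
  define Q where "Q = real (m + 1) * exp (- e * (e * real N - 1)) * real (N choose m)"
  have bb: "real (card (Bad H)) \<le> Q" if "H \<in> reps k n" for H
  proof -
    have HA: "H \<subseteq> A" using that by (auto simp: reps_def is_graph_def A_def)
    have cA0: "card A > 0" using N0 cA by simp
    have mA: "m \<le> card A" using m cA by (simp add: N_def)
    have "real (card (Bad H)) \<le> real (m + 1) * exp (- e * (e * real (card A) - 1)) * real (card A choose m)"
      unfolding Bad_def by (rule bad_bound[OF fA cA0 HA mA e])
    then show ?thesis by (simp add: Q_def cA)
  qed
  have fB: "finite (Bad H)" for H
    by (rule finite_subset[of _ "Pow A"]) (use fA in \<open>auto simp: Bad_def\<close>)
  have "card (\<Union>H\<in>reps k n. Bad H) \<le> (\<Sum>H\<in>reps k n. card (Bad H))"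
    by (rule card_UN_le[OF finite_reps])
  then have "real (card (\<Union>H\<in>reps k n. Bad H)) \<le> (\<Sum>H\<in>reps k n. real (card (Bad H)))"
    by (simp flip: of_nat_sum)
  also have "\<dots> \<le> (\<Sum>H\<in>reps k n. Q)" by (rule sum_mono) (rule bb)
  also have "\<dots> = real (card (reps k n)) * Q" by simp
  also have "\<dots> \<le> real (n ^ (k * n)) * Q"
    using card_reps[of k n] by (intro mult_right_mono) (auto simp: Q_def)
  also have "\<dots> \<le> real (n ^ (k * n)) * (real (N + 1) * exp (- e * (e * real N - 1))) * real (N choose m)"
  proof -
    have "real (m + 1) * exp (- e * (e * real N - 1)) \<le> real (N + 1) * exp (- e * (e * real N - 1))"
      using m by (intro mult_right_mono) (auto simp: N_def)
    then have "Q \<le> real (N + 1) * exp (- e * (e * real N - 1)) * real (N choose m)"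
      unfolding Q_def by (intro mult_right_mono) auto
    then show ?thesis by (simp add: mult.assoc mult_left_mono)
  qed
  also have "\<dots> < real (N choose m)"
  proof -
    have "N choose m > 0" using m by (simp add: N_def)
    then show ?thesis using sm by (simp add: N_def mult.assoc)
  qed
  finally have lt: "card (\<Union>H\<in>reps k n. Bad H) < card {G. G \<subseteq> A \<and> card G = m}"
    using n_subsets[OF fA, of m] cA by simp
  have "\<not> {G. G \<subseteq> A \<and> card G = m} \<subseteq> (\<Union>H\<in>reps k n. Bad H)"
  proof
    assume "{G. G \<subseteq> A \<and> card G = m} \<subseteq> (\<Union>H\<in>reps k n. Bad H)"
    then have "card {G. G \<subseteq> A \<and> card G = m} \<le> card (\<Union>H\<in>reps k n. Bad H)"
      by (intro card_mono) (use finite_reps fB in auto)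
    then show False using lt by simp
  qed
  then obtain G where G: "G \<subseteq> A" "card G = m" "\<And>H. H \<in> reps k n \<Longrightarrow> G \<notin> Bad H" by blast
  have fG: "finite G" using G fA finite_subset by blast
  have "min (real m) (real N - real m) / real N - 4 * e \<le> gdist n G H" if H: "H \<in> reps k n" for H
  proof -
    have HA: "H \<subseteq> A" using H by (auto simp: reps_def is_graph_def A_def)
    have fH: "finite H" using HA fA finite_subset by blast
    have hN: "card H \<le> N" using card_mono[OF fA HA] cA by simp
    have lt: "real (card (G \<inter> H)) < real (card H) * real m / real N + 2 * (e * real N)"
      using G(3)[OF H] G(1,2) by (auto simp: Bad_def cA)
    have sd: "real (card (G - H \<union> (H - G))) = real m + real (card H) - 2 * real (card (G \<inter> H))"
    proof -
      have e1: "card (G - H \<union> (H - G)) + 2 * card (G \<inter> H) = m + card H"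
        using symdiff_card[OF fG fH] G(2) by simp
      have "real (card (G - H \<union> (H - G)) + 2 * card (G \<inter> H)) = real (m + card H)"
        using e1 by (rule arg_cong)
      then show ?thesis by simp
    qed
    have mh: "real m + real (card H) - 2 * real (card H) * real m / real N \<ge> min (real m) (real N - real m)"
      by (rule mh_bound) (use hN m N0 in \<open>auto simp: N_def\<close>)
    define t where "t = real (card H) * real m / real N"
    have mh': "real m + real (card H) - 2 * t \<ge> min (real m) (real N - real m)"
      using mh by (simp add: t_def)
    have lt': "real (card (G \<inter> H)) < t + 2 * (e * real N)" using lt by (simp add: t_def)
    have "real (card (G - H \<union> (H - G))) \<ge> min (real m) (real N - real m) - 4 * e * real N"
      using sd lt' mh' by linarith
    then have "real (card (G - H \<union> (H - G))) / real N \<ge> (min (real m) (real N - real m) - 4 * e * real N) / real N"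
      using N0 by (intro divide_right_mono) auto
    then show ?thesis using N0 by (simp add: gdist_def N_def diff_divide_distrib)
  qed
  then have "min (real m) (real N - real m) / real N - 4 * e \<le> dist_kword k n G"
    by (intro dist_ge[OF k]) auto
  moreover have "is_graph n G" using G by (simp add: is_graph_def A_def)
  ultimately show ?thesis using G by (auto simp: N_def)
qed




lemma N_pos: "n \<ge> 2 \<Longrightarrow> real (n choose 2) > 0" by simp

lemma card_le_N: "is_graph n G \<Longrightarrow> card G \<le> n choose 2"
  using card_mono[OF finite_all_edges, of G n] card_all_edges by (simp add: is_graph_def)

lemma upper_density:
  assumes "k \<ge> 2" "is_graph n G"
  shows "dist_kword k n G \<le> min (real (card G)) (real (n choose 2) - real (card G)) / real (n choose 2)"
  using dist_upper1[OF assms] dist_upper2[OF assms(2), of k] by (simp add: min_divide_distrib_right)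

definition mmp :: "real \<Rightarrow> nat \<Rightarrow> nat" where "mmp p n = nat \<lfloor>p * real (n choose 2)\<rfloor>"

lemma mmp_bounds:
  assumes "0 \<le> p" "p \<le> 1"
  shows "real (mmp p n) \<le> p * real (n choose 2)" "real (mmp p n) > p * real (n choose 2) - 1"
    "mmp p n \<le> n choose 2"
proof -
  have q0: "p * real (n choose 2) \<ge> 0" using assms by simp
  then have r: "real (mmp p n) = of_int \<lfloor>p * real (n choose 2)\<rfloor>" by (simp add: mmp_def)
  show a: "real (mmp p n) \<le> p * real (n choose 2)" unfolding r by simp
  show "real (mmp p n) > p * real (n choose 2) - 1" unfolding r by linarith
  have "p * real (n choose 2) \<le> real (n choose 2)" using assms mult_right_mono[of p 1 "real (n choose 2)"] by simp
  then show "mmp p n \<le> n choose 2" using a by linarith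
qed

lemma set_density_eq:
  "{dist_kword k n G | G. is_graph n G \<and> card G = m} = dist_kword k n ` {G. G \<subseteq> all_edges n \<and> card G = m}"
  by (auto simp: is_graph_def)

lemma finite_set_density: "finite {dist_kword k n G | G. is_graph n G \<and> card G = m}"
  unfolding set_density_eq by (rule finite_imageI) (rule finite_subset[of _ "Pow (all_edges n)"], auto simp: finite_all_edges)

lemma mdd_eq: "max_dist_density k p n = Max {dist_kword k n G | G. is_graph n G \<and> card G = mmp p n}"
  by (simp add: max_dist_density_def mmp_def)

lemma mdd_upper:
  assumes k: "k \<ge> 2" and p: "0 \<le> p" "p \<le> 1" and n: "n \<ge> 2"
  shows "max_dist_density k p n \<le> min p (1 - p) + 1 / real (n choose 2)"
proof -
  define N where "N = real (n choose 2)"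
  define m where "m = mmp p n"
  have N0: "N > 0" using n by (simp add: N_def)
  have mb: "real m \<le> p * N" "real m > p * N - 1" "m \<le> n choose 2"
    using mmp_bounds[OF p, of n] by (auto simp: m_def N_def)
  obtain G0 where "G0 \<subseteq> all_edges n" "card G0 = m"
    using obtain_subset_with_card_n[of m "all_edges n"] mb(3) by (auto simp: card_all_edges)
  then have ne: "{dist_kword k n G | G. is_graph n G \<and> card G = m} \<noteq> {}" by (auto simp: is_graph_def)
  have bnd: "min (real m) (N - real m) / N \<le> min p (1 - p) + 1 / N"
  proof -
    have "min (real m) (N - real m) / N \<le> real m / N" using N0 by (intro divide_right_mono) auto
    also have "\<dots> \<le> p" using mb(1) N0 by (simp add: divide_le_eq)
    finally have a0: "min (real m) (N - real m) / N \<le> p" .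
    have "1 / N > 0" using N0 by simp
    then have a: "min (real m) (N - real m) / N \<le> p + 1 / N" using a0 by linarith
    have "min (real m) (N - real m) / N \<le> (N - real m) / N" using N0 by (intro divide_right_mono) auto
    also have "\<dots> \<le> (N - (p * N - 1)) / N" using mb(2) N0 by (intro divide_right_mono) auto
    also have "\<dots> = 1 - p + 1 / N" using N0 by (simp add: field_simps)
    finally show ?thesis using a by linarith
  qed
  have "\<forall>x\<in>{dist_kword k n G | G. is_graph n G \<and> card G = m}. x \<le> min p (1 - p) + 1 / N"
    using upper_density[OF k] bnd by (auto simp: N_def intro: order_trans)
  then have "Max {dist_kword k n G | G. is_graph n G \<and> card G = m} \<le> min p (1 - p) + 1 / N"
    using finite_set_density ne by (subst Max_le_iff) auto
  then show ?thesis by (simp add: mdd_eq m_def N_def)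
qed

lemma mdd_lower:
  assumes k: "k \<ge> 2" and p: "0 \<le> p" "p \<le> 1" and n: "n \<ge> 2" and e: "0 < e" "e \<le> 1"
    and sm: "real (n ^ (k * n)) * real ((n choose 2) + 1) * exp (- e * (e * real (n choose 2) - 1)) < 1"
  shows "max_dist_density k p n \<ge> min p (1 - p) - 1 / real (n choose 2) - 4 * e"
proof -
  define N where "N = real (n choose 2)"
  define m where "m = mmp p n"
  have N0: "N > 0" using n by (simp add: N_def)
  have mb: "real m \<le> p * N" "real m > p * N - 1" "m \<le> n choose 2"
    using mmp_bounds[OF p, of n] by (auto simp: m_def N_def)
  obtain G where G: "is_graph n G" "card G = m"
    "dist_kword k n G \<ge> min (real m) (N - real m) / N - 4 * e"
    using good_exists[OF k n e sm mb(3)] by (auto simp: N_def)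
  have bnd: "min (real m) (N - real m) / N \<ge> min p (1 - p) - 1 / N"
  proof -
    have a1: "(p * N - 1) / N \<le> real m / N" using mb(2) N0 by (intro divide_right_mono) auto
    have a2: "(p * N - 1) / N = p - 1 / N" using N0 by (simp add: field_simps)
    have a: "real m / N \<ge> p - 1 / N" using a1 a2 by simp
    have b: "(N - real m) / N \<ge> 1 - p" using mb(1) N0 by (simp add: field_simps)
    have i: "1 / N > 0" using N0 by simp
    have eq: "min (real m) (N - real m) / N = min (real m / N) ((N - real m) / N)"
      using N0 by (simp add: min_divide_distrib_right)
    have "min p (1 - p) \<le> p" "min p (1 - p) \<le> 1 - p" by auto
    then show ?thesis unfolding eq min.bounded_iff using a b i by linarith
  qed
  have "dist_kword k n G \<in> {dist_kword k n G | G. is_graph n G \<and> card G = m}" using G by auto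
  then have "dist_kword k n G \<le> Max {dist_kword k n G | G. is_graph n G \<and> card G = m}"
    using finite_set_density by (rule Max_ge[rotated])
  then have "dist_kword k n G \<le> max_dist_density k p n" by (simp add: mdd_eq m_def)
  then show ?thesis using G(3) bnd by (simp add: N_def)
qed




theorem mainTheorem2:
  fixes k :: nat
  assumes "k \<ge> 2"
  shows "(\<forall>p::real. 0 \<le> p \<and> p \<le> 1 \<longrightarrow>
           (max_dist_density k p \<longlonglongrightarrow> min p (1 - p)))
       \<and> (max_dist k \<longlonglongrightarrow> 1 / 2)
       \<and> (\<forall>\<epsilon>::real. \<epsilon> > 0 \<longrightarrow>
           (\<forall>n G. n \<ge> 2 \<and> is_graph n G \<and> dist_kword k n G \<ge> 1 / 2 - \<epsilon> \<longrightarrow>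
              1 / 2 - \<epsilon> \<le> real (card G) / real (n choose 2) \<and>
              real (card G) / real (n choose 2) \<le> 1 / 2 + \<epsilon>))"
proof (intro conjI allI impI)
  have P1: "max_dist_density k p \<longlonglongrightarrow> min p (1 - p)" if p: "0 \<le> p" "p \<le> 1" for p
  proof (rule tendstoI)
    fix r :: real assume r: "r > 0"
    define e where "e = min (r / 16) 1"
    have e: "0 < e" "e \<le> 1" "4 * e \<le> r / 4" using r by (auto simp: e_def)
    have ev1: "eventually (\<lambda>n. 1 / real (n choose 2) < r / 2) sequentially"
      by (rule order_tendstoD(2)[OF invN]) (use r in simp)
    have ev2: "eventually (\<lambda>n::nat. n \<ge> 2) sequentially" by (rule eventually_ge_at_top)
    show "eventually (\<lambda>n. dist (max_dist_density k p n) (min p (1 - p)) < r) sequentially"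
      using ev1 ev2 eventually_small[OF e(1,2), of k]
    proof eventually_elim
      case (elim n)
      have u: "max_dist_density k p n \<le> min p (1 - p) + 1 / real (n choose 2)"
        by (rule mdd_upper[OF assms p elim(2)])
      have l: "max_dist_density k p n \<ge> min p (1 - p) - 1 / real (n choose 2) - 4 * e"
        by (rule mdd_lower[OF assms p elim(2) e(1,2) elim(3)])
      show ?case using u l elim(1) e(3) by (simp add: dist_real_def abs_less_iff)
    qed
  qed
  then show "\<And>p. 0 \<le> p \<and> p \<le> 1 \<Longrightarrow> max_dist_density k p \<longlonglongrightarrow> min p (1 - p)" by blast
  have half: "max_dist_density k (1 / 2) \<longlonglongrightarrow> 1 / 2"
    using P1[of "1 / 2"] by simp
  have md_eq: "{dist_kword k n G | G. is_graph n G} = dist_kword k n ` Pow (all_edges n)" for n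
    by (auto simp: is_graph_def)
  have fin: "finite {dist_kword k n G | G. is_graph n G}" for n
    unfolding md_eq by (simp add: finite_all_edges)
  have lo: "eventually (\<lambda>n. max_dist_density k (1 / 2) n \<le> max_dist k n) sequentially"
    using eventually_ge_at_top[of 2]
  proof eventually_elim
    case (elim n)
    have ne: "{dist_kword k n G | G. is_graph n G \<and> card G = mmp (1 / 2) n} \<noteq> {}"
    proof -
      obtain G0 where "G0 \<subseteq> all_edges n" "card G0 = mmp (1 / 2) n"
        using obtain_subset_with_card_n[of "mmp (1 / 2) n" "all_edges n"] mmp_bounds(3)[of "1 / 2" n]
        by (auto simp: card_all_edges)
      then show ?thesis by (auto simp: is_graph_def)
    qed
    have "Max {dist_kword k n G | G. is_graph n G \<and> card G = mmp (1 / 2) n} \<le> Max {dist_kword k n G | G. is_graph n G}"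
      by (rule Max_mono[OF _ ne fin]) auto
    then show ?case by (simp add: mdd_eq max_dist_def)
  qed
  have hi: "eventually (\<lambda>n. max_dist k n \<le> 1 / 2) sequentially"
    using eventually_ge_at_top[of 2]
  proof eventually_elim
    case (elim n)
    have ne: "{dist_kword k n G | G. is_graph n G} \<noteq> {}" by (auto simp: is_graph_def)
    have "\<forall>x\<in>{dist_kword k n G | G. is_graph n G}. x \<le> 1 / 2"
    proof clarify
      fix G assume G: "is_graph n G"
      have "dist_kword k n G \<le> min (real (card G)) (real (n choose 2) - real (card G)) / real (n choose 2)"
        by (rule upper_density[OF assms G])
      also have "\<dots> \<le> 1 / 2"
        using N_pos[OF elim] by (simp add: divide_le_eq min_def)
      finally show "dist_kword k n G \<le> 1 / 2" .
    qed
    then show ?case unfolding max_dist_def using fin ne by (subst Max_le_iff) auto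
  qed
  show "max_dist k \<longlonglongrightarrow> 1 / 2"
    by (rule tendsto_sandwich[OF lo hi half tendsto_const])
next
  fix \<epsilon> :: real and n G
  assume "\<epsilon> > 0" and H: "n \<ge> 2 \<and> is_graph n G \<and> dist_kword k n G \<ge> 1 / 2 - \<epsilon>"
  have N0: "real (n choose 2) > 0" using H by simp
  have a: "dist_kword k n G \<le> real (card G) / real (n choose 2)"
    using dist_upper1[OF assms] H by blast
  have b: "dist_kword k n G \<le> (real (n choose 2) - real (card G)) / real (n choose 2)"
    using dist_upper2 H by blast
  have b': "(real (n choose 2) - real (card G)) / real (n choose 2) = 1 - real (card G) / real (n choose 2)"
    using N0 by (simp add: diff_divide_distrib)
  show "1 / 2 - \<epsilon> \<le> real (card G) / real (n choose 2)" using a H by linarith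
  show "real (card G) / real (n choose 2) \<le> 1 / 2 + \<epsilon>" using b b' H by linarith
qed


end
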